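(* Let $\lambda>0$, $r\in(0,1)$, $m\in(r,1)$, $v\in(0,D(m))$, $U(w)=-e^{-\lambda w}$, and let $X$ have distribution function $F_{m,v}$. Let $\gamma^*_{\lambda,r}(m,v)$ be the maximizer over $\gamma\in[0,1]$ of $\mathbb E\,U(1+r+\gamma(X-r))$. Then $\gamma^*_{\lambda,r}(m,v)\in[\gamma^{\min}_{\lambda,r}(m),1]$, where $\gamma^{\min}_{\lambda,r}(m)=\min\left\{\frac1\lambda\ln\!\left(\frac{m(1-r)}{r(1-m)}\right),1\right\}$.
   Context: $D(m)=m-m^2$. For $0<v<D(m)$, $F_{m,v}$ is the distribution function of the Beta$(\alpha,\beta)$ law (density $x^{\alpha-1}(1-x)^{\beta-1}/B(\alpha,\beta)$ on $(0,1)$) with $\alpha=\frac{m(m-m^2-v)}{v}$, $\beta=\frac{(1-m)(m-m^2-v)}{v}$, i.e. the Beta law with mean $m$ and variance $v$. Initial wealth is normalized to 1; $\gamma$ is the fraction invested in the risky return $X$, the rest earning the risk-free return $r$. *)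

theory Defs
  imports "HOL-Probability.Probability"
begin

definition D :: "real \<Rightarrow> real" where
  "D m = m - m^2"

definition beta_alpha :: "real \<Rightarrow> real \<Rightarrow> real" where
  "beta_alpha m v = m * (m - m^2 - v) / v"

definition beta_beta :: "real \<Rightarrow> real \<Rightarrow> real" where
  "beta_beta m v = (1 - m) * (m - m^2 - v) / v"

definition beta_density :: "real \<Rightarrow> real \<Rightarrow> real \<Rightarrow> real" where
  "beta_density a b x =
     (if 0 < x \<and> x < 1 then x powr (a - 1) * (1 - x) powr (b - 1) / Beta a b else 0)"

text \<open>The law with distribution function F_{m,v}: Beta law with mean m and variance v.\<close>
definition beta_law :: "real \<Rightarrow> real \<Rightarrow> real measure" where
  "beta_law m v = density lborel (\<lambda>x. ennreal (beta_density (beta_alpha m v) (beta_beta m v) x))"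

definition U_exp :: "real \<Rightarrow> real \<Rightarrow> real" where
  "U_exp lam w = - exp (- lam * w)"

definition exp_util :: "real \<Rightarrow> real \<Rightarrow> real \<Rightarrow> real \<Rightarrow> real \<Rightarrow> real" where
  "exp_util lam r m v g = (\<integral>x. U_exp lam (1 + r + g * (x - r)) \<partial>beta_law m v)"

definition is_opt_fraction :: "real \<Rightarrow> real \<Rightarrow> real \<Rightarrow> real \<Rightarrow> real \<Rightarrow> bool" where
  "is_opt_fraction lam r m v g \<longleftrightarrow>
     g \<in> {0..1} \<and> (\<forall>h\<in>{0..1}. exp_util lam r m v h \<le> exp_util lam r m v g)"

definition gamma_min :: "real \<Rightarrow> real \<Rightarrow> real \<Rightarrow> real" where
  "gamma_min lam r m = min ((1 / lam) * ln (m * (1 - r) / (r * (1 - m)))) 1"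

end

theory Submission
  imports Defs
begin


lemma Beta_pos: "0 < (a::real) \<Longrightarrow> 0 < b \<Longrightarrow> 0 < Beta a b"
  unfolding Beta_def by (intro divide_pos_pos mult_pos_pos Gamma_real_pos) auto

lemma beta_density_meas[measurable]: "beta_density a b \<in> borel_measurable borel"
  unfolding beta_density_def by measurable

lemma sets_beta_law[measurable_cong]: "sets (beta_law m v) = sets borel"
  unfolding beta_law_def by simp

lemma beta_setup:
  fixes a b :: real
  assumes a: "0 < a" and b: "0 < b"
  shows "emeasure (density lborel (\<lambda>x. ennreal (beta_density a b x))) UNIV = 1"
    and "(\<integral>\<^sup>+x. ennreal x \<partial>density lborel (\<lambda>x. ennreal (beta_density a b x))) = ennreal (a/(a+b))"
proof -
  define B where "B = Beta a b"
  have B: "0 < B" using Beta_pos a b B_def by simp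
  have eq1: "ennreal (beta_density a b x) = ennreal (x powr (a - 1) * (1 - x) powr (b - 1) / B) * indicator {0..1} x" for x
    by (cases "0 < x \<and> x < 1") (auto simp: beta_density_def B_def indicator_def)
  have "emeasure (density lborel (\<lambda>x. ennreal (beta_density a b x))) UNIV
      = (\<integral>\<^sup>+x. ennreal (beta_density a b x) \<partial>lborel)"
    by (subst emeasure_density) auto
  also have "\<dots> = (\<integral>\<^sup>+x. ennreal (x powr (a - 1) * (1 - x) powr (b - 1) / B) * indicator {0..1} x \<partial>lborel)"
    by (simp add: eq1)
  also have "\<dots> = ennreal 1"
  proof (rule nn_integral_has_integral_lebesgue')
    show "((\<lambda>x. x powr (a - 1) * (1 - x) powr (b - 1) / B) has_integral 1) {0..1}"
      using has_integral_divide[OF has_integral_Beta_real[OF a b], of B] B by (simp add: B_def)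
  qed (use B in auto)
  finally show "emeasure (density lborel (\<lambda>x. ennreal (beta_density a b x))) UNIV = 1" by simp
  have eq2: "ennreal (beta_density a b x) * ennreal x = ennreal (x powr a * (1 - x) powr (b - 1) / B) * indicator {0..1} x" for x
  proof (cases "0 < x \<and> x < 1")
    case True
    then have "x powr a = x * x powr (a - 1)" by (simp add: powr_diff)
    then show ?thesis using True B by (simp add: beta_density_def B_def ennreal_mult''[symmetric] indicator_def)
  qed (auto simp: beta_density_def B_def indicator_def)
  have "(\<integral>\<^sup>+x. ennreal x \<partial>density lborel (\<lambda>x. ennreal (beta_density a b x)))
      = (\<integral>\<^sup>+x. ennreal (beta_density a b x) * ennreal x \<partial>lborel)"
    by (subst nn_integral_density) auto
  also have "\<dots> = (\<integral>\<^sup>+x. ennreal (x powr a * (1 - x) powr (b - 1) / B) * indicator {0..1} x \<partial>lborel)"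
    by (simp add: eq2)
  also have "\<dots> = ennreal (Beta (a+1) b / B)"
  proof (rule nn_integral_has_integral_lebesgue')
    show "((\<lambda>x. x powr a * (1 - x) powr (b - 1) / B) has_integral (Beta (a+1) b / B)) {0..1}"
      using has_integral_divide[OF has_integral_Beta_real[of "a+1" b], of B] a b by simp
  qed (use B in auto)
  also have "Beta (a+1) b / B = a/(a+b)"
  proof -
    have "a \<notin> \<int>\<^sub>\<le>\<^sub>0" using a by (auto elim!: nonpos_Ints_cases)
    from Beta_plus1_left[OF this, of b] have "(a + b) * Beta (a + 1) b = a * B" by (simp add: B_def)
    then show ?thesis using a b B by (simp add: field_simps)
  qed
  finally show "(\<integral>\<^sup>+x. ennreal x \<partial>density lborel (\<lambda>x. ennreal (beta_density a b x))) = ennreal (a/(a+b))" .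
qed



lemma exp_quad: fixes y :: real assumes "\<bar>y\<bar> \<le> 1" shows "exp y \<le> 1 + y + y^2"
proof (cases "y \<ge> 0")
  case True then show ?thesis using exp_bound[of y] assms by simp
next
  case False
  define t where "t = -y"
  have t: "0 < t" "t \<le> 1" using False assms t_def by auto
  have "1 + t \<le> exp t" by (rule exp_ge_add_one_self)
  moreover have "0 < 1 - t + t^2" using t by (simp add: power2_eq_square) (smt (verit) mult_pos_pos t(1))
  ultimately have "(1 + t) * (1 - t + t^2) \<le> exp t * (1 - t + t^2)" by (simp add: mult_right_mono)
  moreover have "(1 + t) * (1 - t + t^2) = 1 + t^3" by (simp add: algebra_simps power2_eq_square power3_eq_cube)
  moreover have "0 \<le> t^3" using t by simp
  ultimately have "1 \<le> exp t * (1 - t + t^2)" by linarith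
  hence "exp (-t) * 1 \<le> exp (-t) * (exp t * (1 - t + t^2))" by (simp add: mult_left_mono)
  hence "exp (-t) \<le> 1 - t + t^2" by (simp add: exp_minus field_simps)
  then show ?thesis by (simp add: t_def)
qed

lemma exp_lip: fixes s t L :: real assumes "s \<le> L" "t \<le> L"
  shows "\<bar>exp s - exp t\<bar> \<le> exp L * \<bar>s - t\<bar>"
proof -
  have key: "exp s - exp t \<le> exp L * (s - t)" if "t \<le> s" "s \<le> L" for s t :: real
  proof -
    have "1 - (s - t) \<le> exp (-(s - t))" using exp_ge_add_one_self[of "-(s-t)"] by (simp add: exp_diff)
    hence "exp s * (1 - exp (t - s)) \<le> exp s * (s - t)" by (intro mult_left_mono) auto
    moreover have "exp s * (1 - exp (t - s)) = exp s - exp t" by (simp add: algebra_simps exp_diff)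
    moreover have "exp s * (s - t) \<le> exp L * (s - t)" using that by (intro mult_right_mono) auto
    ultimately show ?thesis by linarith
  qed
  show ?thesis
  proof (cases "t \<le> s")
    case True then show ?thesis using key[of t s] assms by (simp add: abs_if)
  next
    case False then show ?thesis using key[of s t] assms by (simp add: abs_if)
  qed
qed

lemma chord:
  fixes c r x :: real
  assumes c: "0 \<le> c" and r: "0 < r" "r < 1" and x: "0 \<le> x" "x \<le> 1"
  shows "(1 - x) * (- r * exp (c * r)) + x * ((1 - r) * exp (- c * (1 - r))) \<le> (x - r) * exp (- c * (x - r))"
proof -
  define F where "F = (x - r) * exp (- c * x) + (1 - x) * r - x * (1 - r) * exp (- c)"
  have e1: "exp (- c * (x - r)) = exp (c * r) * exp (- c * x)" by (simp add: algebra_simps flip: exp_add)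
  have e2: "exp (- c * (1 - r)) = exp (c * r) * exp (- c)" by (simp add: algebra_simps flip: exp_add)
  have ec: "exp (- c) \<le> 1" using c by simp
  have "0 \<le> F"
  proof (cases "x < r")
    case True
    have "exp (- c * x) = exp ((1 - x) *\<^sub>R 0 + x *\<^sub>R (- c))" by (simp add: algebra_simps)
    also have "\<dots> \<le> (1 - x) * exp 0 + x * exp (- c)"
      by (rule convex_onD[OF exp_convex]) (use x in auto)
    finally have "exp (- c * x) \<le> (1 - x) + x * exp (- c)" by simp
    hence "(x - r) * ((1 - x) + x * exp (- c)) \<le> (x - r) * exp (- c * x)"
      using True by (intro mult_left_mono_neg) auto
    hence "x * (1 - x) * (1 - exp (- c)) \<le> F" unfolding F_def by (simp add: algebra_simps)
    moreover have "0 \<le> x * (1 - x) * (1 - exp (- c))" using x ec by simp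
    ultimately show ?thesis by linarith
  next
    case False
    have "1 + c * (1 - x) \<le> exp (c * (1 - x))" by (rule exp_ge_add_one_self)
    hence "exp (- c) * (1 + c * (1 - x)) \<le> exp (- c) * exp (c * (1 - x))" by (simp add: mult_left_mono)
    also have "exp (- c) * exp (c * (1 - x)) = exp (- c * x)" by (simp add: algebra_simps flip: exp_add)
    finally have "(x - r) * (exp (- c) * (1 + c * (1 - x))) \<le> (x - r) * exp (- c * x)"
      using False by (intro mult_left_mono) auto
    hence "(1 - x) * (r * (1 - exp (- c)) + c * (x - r) * exp (- c)) \<le> F" unfolding F_def by (simp add: algebra_simps)
    moreover have "0 \<le> (1 - x) * (r * (1 - exp (- c)) + c * (x - r) * exp (- c))"
      using x ec r c False by (intro mult_nonneg_nonneg add_nonneg_nonneg) auto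
    ultimately show ?thesis by linarith
  qed
  hence "0 \<le> exp (c * r) * F" by simp
  moreover have "exp (c * r) * F = (x - r) * exp (- c * (x - r)) - ((1 - x) * (- r * exp (c * r)) + x * ((1 - r) * exp (- c * (1 - r))))"
    unfolding F_def e1 e2 by (simp add: algebra_simps)
  ultimately show ?thesis by linarith
qed



lemma law_props:
  fixes m v :: real
  assumes "0 < m" "m < 1" "0 < v" "v < D m"
  shows "prob_space (beta_law m v)"
    and "AE x in beta_law m v. 0 < x \<and> x < 1"
    and "integrable (beta_law m v) (\<lambda>x. x)"
    and "(\<integral>x. x \<partial>beta_law m v) = m"
proof -
  define a where "a = beta_alpha m v"
  define b where "b = beta_beta m v"
  have w: "0 < m - m^2 - v" using assms by (simp add: D_def)
  have a: "0 < a" unfolding a_def beta_alpha_def using assms w by simp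
  have b: "0 < b" unfolding b_def beta_beta_def using assms w by simp
  have ab: "a / (a + b) = m"
  proof -
    define w' where "w' = m - m^2 - v"
    have aw: "a = m * w' / v" unfolding a_def beta_alpha_def w'_def ..
    have bw: "b = (1 - m) * w' / v" unfolding b_def beta_beta_def w'_def ..
    have "a + b = w' / v" unfolding aw bw by (simp add: add_divide_distrib[symmetric] algebra_simps)
    then show ?thesis unfolding aw using w assms by (simp add: w'_def)
  qed
  have M: "beta_law m v = density lborel (\<lambda>x. ennreal (beta_density a b x))"
    unfolding beta_law_def a_def b_def ..
  show P: "prob_space (beta_law m v)"
    by (rule prob_spaceI) (simp add: M beta_setup(1)[OF a b])
  show AE: "AE x in beta_law m v. 0 < x \<and> x < 1"
    unfolding M by (subst AE_density) (auto simp: beta_density_def split: if_splits)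
  have "has_bochner_integral (beta_law m v) (\<lambda>x. x) m"
  proof (rule has_bochner_integral_nn_integral)
    show "AE x in beta_law m v. 0 \<le> x" using AE by eventually_elim auto
    show "(\<integral>\<^sup>+x. ennreal x \<partial>beta_law m v) = ennreal m"
      unfolding M beta_setup(2)[OF a b] ab ..
  qed (use assms in auto)
  then show "integrable (beta_law m v) (\<lambda>x. x)" "(\<integral>x. x \<partial>beta_law m v) = m"
    by (auto simp: has_bochner_integral_iff)
qed



theorem lemma4:
  fixes lam r m v :: real
  assumes "lam > 0" and "0 < r" and "r < 1" and "r < m" and "m < 1"
    and "0 < v" and "v < D m"
  shows "(\<exists>g. is_opt_fraction lam r m v g) \<and>
         (\<forall>g. is_opt_fraction lam r m v g \<longrightarrow> g \<in> {gamma_min lam r m..1})"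
proof -
  note lam = \<open>lam > 0\<close>
  have m0: "0 < m" using assms by simp
  note LP = law_props[OF m0 \<open>m < 1\<close> \<open>0 < v\<close> \<open>v < D m\<close>]
  define M where "M = beta_law m v"
  interpret P: prob_space M using LP(1) M_def by simp
  have AE01: "AE x in M. 0 < x \<and> x < 1" unfolding M_def by (rule LP(2))
  have intx: "integrable M (\<lambda>x. x)" and meanx: "(\<integral>x. x \<partial>M) = m" unfolding M_def by (rule LP(3), rule LP(4))
  define u where "u g x = U_exp lam (1 + r + g * (x - r))" for g x
  define EU where "EU = exp_util lam r m v"
  have EU: "EU g = (\<integral>x. u g x \<partial>M)" for g
    unfolding EU_def exp_util_def u_def M_def ..
  have meas[measurable]: "u g \<in> borel_measurable M" for g
    unfolding u_def U_exp_def M_def by measurable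
  have pos: "0 < 1 + r + g * (x - r)" if "g \<in> {0..1}" "0 < x" for g x
  proof -
    have "g * (- r) \<le> g * (x - r)" using that by (intro mult_left_mono) auto
    moreover have "- r \<le> g * (- r)" using that assms by (simp add: mult_le_cancel_right1)
    ultimately show ?thesis using assms by linarith
  qed
  have ubound: "\<bar>u g x\<bar> \<le> 1" if "g \<in> {0..1}" "0 < x" for g x
    using pos[OF that] lam unfolding u_def U_exp_def by simp
  have int: "integrable M (u g)" if "g \<in> {0..1}" for g
  proof (rule P.integrable_const_bound[where B=1])
    show "AE x in M. norm (u g x) \<le> 1" using AE01 by eventually_elim (use ubound that in auto)
  qed simp
  have lip: "\<bar>EU g - EU h\<bar> \<le> lam * \<bar>g - h\<bar>" if g: "g \<in> {0..1}" and h: "h \<in> {0..1}" for g h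
  proof -
    have pw: "\<bar>u g x - u h x\<bar> \<le> lam * \<bar>g - h\<bar>" if "0 < x" "x < 1" for x
    proof -
      have s: "- lam * (1 + r + g * (x - r)) \<le> 0" using pos[OF g \<open>0 < x\<close>] lam by simp
      have t: "- lam * (1 + r + h * (x - r)) \<le> 0" using pos[OF h \<open>0 < x\<close>] lam by simp
      have "\<bar>u g x - u h x\<bar> = \<bar>exp (- lam * (1 + r + g * (x - r))) - exp (- lam * (1 + r + h * (x - r)))\<bar>"
        unfolding u_def U_exp_def by (simp add: abs_minus_commute)
      also have "\<dots> \<le> exp 0 * \<bar>- lam * (1 + r + g * (x - r)) - - lam * (1 + r + h * (x - r))\<bar>"
        by (rule exp_lip[OF s t])
      also have "- lam * (1 + r + g * (x - r)) - - lam * (1 + r + h * (x - r)) = lam * ((g - h) * (r - x))"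
        by (simp add: algebra_simps)
      also have "exp 0 * \<bar>lam * ((g - h) * (r - x))\<bar> = lam * (\<bar>g - h\<bar> * \<bar>x - r\<bar>)"
        using lam by (simp add: abs_mult abs_minus_commute)
      also have "\<dots> \<le> lam * (\<bar>g - h\<bar> * 1)" using that assms lam by (intro mult_left_mono) auto
      finally show ?thesis by simp
    qed
    have aeb: "AE x in M. \<bar>u g x - u h x\<bar> \<le> lam * \<bar>g - h\<bar>"
      using AE01 by eventually_elim (use pw in blast)
    have ae1: "AE x in M. u g x - u h x \<le> lam * \<bar>g - h\<bar>" using aeb by eventually_elim linarith
    have ae2: "AE x in M. - (lam * \<bar>g - h\<bar>) \<le> u g x - u h x" using aeb by eventually_elim linarith
    have "EU g - EU h = (\<integral>x. u g x - u h x \<partial>M)" unfolding EU using int g h by simp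
    moreover have "(\<integral>x. u g x - u h x \<partial>M) \<le> (\<integral>x. lam * \<bar>g - h\<bar> \<partial>M)"
      using ae1 int g h by (intro integral_mono_AE) auto
    moreover have "(\<integral>x. - (lam * \<bar>g - h\<bar>) \<partial>M) \<le> (\<integral>x. u g x - u h x \<partial>M)"
      using ae2 int g h by (intro integral_mono_AE) auto
    ultimately show ?thesis by (simp add: abs_le_iff P.prob_space)
  qed
  have cont: "continuous_on {0..1} EU"
    unfolding continuous_on_iff
  proof (intro ballI allI impI)
    fix x e :: real assume x: "x \<in> {0..1}" and e: "0 < e"
    show "\<exists>d>0. \<forall>x'\<in>{0..1}. dist x' x < d \<longrightarrow> dist (EU x') (EU x) < e"
    proof (intro exI[of _ "e / lam"] conjI ballI impI)
      show "0 < e / lam" using e lam by simp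
      fix x' assume x': "x' \<in> {0..1}" and d: "dist x' x < e / lam"
      have "dist (EU x') (EU x) \<le> lam * \<bar>x' - x\<bar>" using lip[OF x' x] by (simp add: dist_real_def)
      also have "\<dots> < lam * (e / lam)" using d lam by (intro mult_strict_left_mono) (auto simp: dist_real_def)
      finally show "dist (EU x') (EU x) < e" using lam by simp
    qed
  qed
  have ex: "\<exists>g. is_opt_fraction lam r m v g"
  proof -
    obtain g where "g \<in> {0..1}" "\<forall>y\<in>{0..1}. EU y \<le> EU g"
      using continuous_attains_sup[OF compact_Icc _ cont] by auto
    then show ?thesis unfolding is_opt_fraction_def EU_def by blast
  qed
  have opt: "g \<in> {gamma_min lam r m..1}" if "is_opt_fraction lam r m v g" for g
  proof -
    have g: "g \<in> {0..1}" and gopt: "\<And>h. h \<in> {0..1} \<Longrightarrow> EU h \<le> EU g"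
      using that unfolding is_opt_fraction_def EU_def by auto
    have "gamma_min lam r m \<le> g"
    proof (rule ccontr)
      assume "\<not> gamma_min lam r m \<le> g"
      hence lt: "g < gamma_min lam r m" by simp
      define L where "L = ln (m * (1 - r) / (r * (1 - m)))"
      have g1: "g < 1" and gL: "g < (1 / lam) * L" using lt unfolding gamma_min_def L_def by auto
      define c where "c = lam * g"
      have c0: "0 \<le> c" using g lam by (simp add: c_def)
      have cL: "c < L" using gL lam by (simp add: c_def field_simps)
      have zpos: "0 < m * (1 - r) / (r * (1 - m))" using assms by simp
      have "exp c < m * (1 - r) / (r * (1 - m))"
        using cL zpos by (metis exp_less_cancel_iff exp_ln L_def)
      hence ec: "r * (1 - m) * exp c < m * (1 - r)" using assms by (simp add: field_simps)
      define h0 where "h0 = - r * exp (c * r)"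
      define h1 where "h1 = (1 - r) * exp (- c * (1 - r))"
      define Q where "Q = (1 - m) * h0 + m * h1"
      have Q: "0 < Q"
      proof -
        have i1: "exp (- c) * (r * (1 - m) * exp c) < exp (- c) * (m * (1 - r))"
          using ec by simp
        have i2: "exp (- c) * (r * (1 - m) * exp c) = r * (1 - m)"
          by (simp add: mult.commute mult.left_commute flip: exp_add)
        have "r * (1 - m) < exp (- c) * (m * (1 - r))" using i1 i2 by linarith
        hence "exp (c * r) * (r * (1 - m)) < exp (c * r) * (exp (- c) * (m * (1 - r)))"
          by (intro mult_strict_left_mono) auto
        moreover have "Q = exp (c * r) * (exp (- c) * (m * (1 - r))) - exp (c * r) * (r * (1 - m))"
          unfolding Q_def h0_def h1_def by (simp add: algebra_simps flip: exp_add)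
        ultimately show ?thesis by linarith
      qed
      define e0 where "e0 = exp (- lam * (1 + r))"
      have e0: "0 < e0" by (simp add: e0_def)
      define eps where "eps = min (1 - g) (min (1 / lam) (e0 * Q / (2 * lam)))"
      have eps: "0 < eps" "eps \<le> 1 - g" "lam * eps \<le> 1" "lam * eps \<le> e0 * Q / 2"
        using g1 lam e0 Q by (auto simp: eps_def min_def field_simps)
      have ge: "g + eps \<in> {0..1}" using g eps by auto
      have pw: "lam * eps * e0 * h0 + lam * eps * e0 * (h1 - h0) * x - (lam * eps)^2 \<le> u (g + eps) x - u g x"
        if x: "0 < x" "x < 1" for x
      proof -
        define E where "E = exp (- lam * (1 + r + g * (x - r)))"
        define y where "y = - lam * eps * (x - r)"
        have E: "0 < E" "E \<le> 1" using pos[OF g \<open>0 < x\<close>] lam by (auto simp: E_def)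
        have xr: "\<bar>x - r\<bar> \<le> 1" using x assms by auto
        have ay: "\<bar>y\<bar> \<le> lam * eps" using xr lam eps by (simp add: y_def abs_mult mult_left_le)
        have "u (g + eps) x = - (E * exp y)"
          unfolding u_def U_exp_def E_def y_def by (simp add: algebra_simps flip: exp_add)
        moreover have "u g x = - E" unfolding u_def U_exp_def E_def by simp
        ultimately have d: "u (g + eps) x - u g x = E * (1 - exp y)" by (simp add: algebra_simps)
        have "exp y \<le> 1 + y + y^2" using ay eps by (intro exp_quad) linarith
        hence "E * (- y - y^2) \<le> E * (1 - exp y)" using E by (intro mult_left_mono) auto
        moreover have "y^2 \<le> (lam * eps)^2" using ay by (metis abs_ge_zero power2_abs power_mono)
        hence "E * y^2 \<le> (lam * eps)^2"
          using E by (metis mult_le_cancel_right1 order_trans zero_le_power2 mult_right_mono mult_1)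
        moreover have "E * (x - r) = e0 * ((x - r) * exp (- c * (x - r)))"
          unfolding E_def e0_def c_def by (simp add: algebra_simps flip: exp_add)
        moreover have "(1 - x) * h0 + x * h1 \<le> (x - r) * exp (- c * (x - r))"
          unfolding h0_def h1_def using chord[OF c0 \<open>0 < r\<close> \<open>r < 1\<close>, of x] x by simp
        hence ch: "e0 * ((1 - x) * h0 + x * h1) \<le> e0 * ((x - r) * exp (- c * (x - r)))"
          using e0 by simp
        have le0: "0 \<le> lam * eps" using lam eps by simp
        have "lam * eps * (e0 * ((1 - x) * h0 + x * h1)) \<le> lam * eps * (e0 * ((x - r) * exp (- c * (x - r))))"
          by (rule mult_left_mono[OF ch le0])
        moreover have "E * (- y - y^2) = lam * eps * (E * (x - r)) - E * y^2"
          unfolding y_def by (simp add: algebra_simps power2_eq_square)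
        moreover have "lam * eps * e0 * h0 + lam * eps * e0 * (h1 - h0) * x = lam * eps * (e0 * ((1 - x) * h0 + x * h1))"
          by (simp add: algebra_simps)
        moreover have "lam * eps * (E * (x - r)) = lam * eps * (e0 * ((x - r) * exp (- c * (x - r))))"
          using \<open>E * (x - r) = e0 * ((x - r) * exp (- c * (x - r)))\<close> by simp
        ultimately show ?thesis using d by linarith
      qed
      have "(\<integral>x. lam * eps * e0 * h0 + lam * eps * e0 * (h1 - h0) * x - (lam * eps)^2 \<partial>M)
            \<le> (\<integral>x. u (g + eps) x - u g x \<partial>M)"
      proof (rule integral_mono_AE)
        show "AE x in M. lam * eps * e0 * h0 + lam * eps * e0 * (h1 - h0) * x - (lam * eps)^2 \<le> u (g + eps) x - u g x"
          using AE01 by eventually_elim (use pw in blast)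
        show "integrable M (\<lambda>x. u (g + eps) x - u g x)"
          using int[OF g] int[OF ge] by (rule Bochner_Integration.integrable_diff[rotated])
        show "integrable M (\<lambda>x. lam * eps * e0 * h0 + lam * eps * e0 * (h1 - h0) * x - (lam * eps)^2)"
          using intx by simp
      qed
      moreover have "(\<integral>x. lam * eps * e0 * h0 + lam * eps * e0 * (h1 - h0) * x - (lam * eps)^2 \<partial>M)
          = lam * eps * e0 * h0 + lam * eps * e0 * (h1 - h0) * m - (lam * eps)^2"
        using intx meanx by (simp add: P.prob_space)
      moreover have "(\<integral>x. u (g + eps) x - u g x \<partial>M) = EU (g + eps) - EU g"
        unfolding EU using int[OF g] int[OF ge] by simp
      moreover have "lam * eps * e0 * h0 + lam * eps * e0 * (h1 - h0) * m - (lam * eps)^2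
          = lam * eps * (e0 * Q - lam * eps)"
        unfolding Q_def by (simp add: algebra_simps power2_eq_square)
      moreover have "0 < lam * eps * (e0 * Q - lam * eps)"
      proof (rule mult_pos_pos)
        have "0 < e0 * Q" using e0 Q by simp
        then show "0 < e0 * Q - lam * eps" using eps(4) by linarith
      qed (use eps lam in simp)
      ultimately have "EU g < EU (g + eps)" by linarith
      with gopt[OF ge] show False by simp
    qed
    then show ?thesis using g by simp
  qed
  show ?thesis using ex opt by blast
qed

end
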